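(* Under the hypotheses of the Point SAGA convergence theorem (each $f_i$ differentiable and $\mu$-strongly convex with $\mu>0$, and the Point-SAGA similarity bound with constant $\nu>0$), run Point SAGA with stepsize $\gamma=\frac{1}{\nu^2/\mu+(n-1)\mu}$ and let $\Psi_k:=\|x_k-x_\star\|^2+\gamma\mu\sum_{i=1}^n\|w_k^i-x_\star\|^2$. Then for any $\varepsilon>0$, $$k\ge\left(n+\frac{\nu^2}{\mu^2}\right)\log\left(\frac{\Psi_0}{\varepsilon}\right)\quad\Longrightarrow\quad\mathbb{E}[\Psi_k]\le\varepsilon.$$
   Context: Setting: $f(x)=\frac1n\sum_{i=1}^nf_i(x)$, $x_\star$ its minimizer. Point-SAGA similarity bound: for all $x^1,\dots,x^n\in\mathbb{R}^d$, $\frac1n\sum_{j=1}^n\|\nabla f_j(x^j)-\frac1n\sum_{i=1}^n\nabla f_i(x^i)-\nabla f_j(x_\star)\|^2\le\nu^2\frac1n\sum_{j=1}^n\|x^j-x_\star\|^2$. Point SAGA: parameters $\gamma>0$, $x_0,w_0^1,\dots,w_0^n\in\mathbb{R}^d$. For $k\ge0$: sample $i_k$ uniformly from $[n]$ independently; $h_k=\nabla f_{i_k}(w_k^{i_k})-\frac1n\sum_{j=1}^n\nabla f_j(w_k^j)$; $x_{k+1}=\operatorname{prox}_{\gamma f_{i_k}}(x_k+\gamma h_k)$; $w_{k+1}^{i_k}=x_{k+1}$, $w_{k+1}^j=w_k^j$ for $j\ne i_k$. $\operatorname{prox}_{\gamma\phi}(y):=\arg\min_x\{\phi(x)+\frac1{2\gamma}\|x-y\|^2\}$.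 *)

theory Defs
  imports "HOL-Analysis.Analysis"
begin

definition strongly_convex :: "real \<Rightarrow> ('a::euclidean_space \<Rightarrow> real) \<Rightarrow> bool" where
  "strongly_convex mu f \<longleftrightarrow> convex_on UNIV (\<lambda>x. f x - mu / 2 * (norm x)\<^sup>2)"

definition grad :: "('a::euclidean_space \<Rightarrow> real) \<Rightarrow> 'a \<Rightarrow> 'a" where
  "grad f x = (SOME g. (f has_derivative (\<lambda>h. g \<bullet> h)) (at x))"

definition prox :: "real \<Rightarrow> ('a::euclidean_space \<Rightarrow> real) \<Rightarrow> 'a \<Rightarrow> 'a" where
  "prox gamma phi y = (SOME x. \<forall>z. phi x + (norm (x - y))\<^sup>2 / (2 * gamma)
                                   \<le> phi z + (norm (z - y))\<^sup>2 / (2 * gamma))"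

text \<open>One Point SAGA step with sampled index i (indices are 0..n-1).
  State: (x_k, w_k) with w_k :: nat => 'a.\<close>
definition psaga_step :: "nat \<Rightarrow> (nat \<Rightarrow> 'a::euclidean_space \<Rightarrow> real) \<Rightarrow> real
    \<Rightarrow> 'a \<times> (nat \<Rightarrow> 'a) \<Rightarrow> nat \<Rightarrow> 'a \<times> (nat \<Rightarrow> 'a)" where
  "psaga_step n f gamma s i =
     (let x = fst s; w = snd s;
          h = grad (f i) (w i) - (1 / real n) *\<^sub>R (\<Sum>j<n. grad (f j) (w j));
          x' = prox gamma (f i) (x + gamma *\<^sub>R h)
      in (x', w(i := x')))"

definition psaga_run :: "nat \<Rightarrow> (nat \<Rightarrow> 'a::euclidean_space \<Rightarrow> real) \<Rightarrow> real
    \<Rightarrow> 'a \<times> (nat \<Rightarrow> 'a) \<Rightarrow> nat list \<Rightarrow> 'a \<times> (nat \<Rightarrow> 'a)" where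
  "psaga_run n f gamma s0 is = foldl (psaga_step n f gamma) s0 is"

definition psaga_Psi :: "nat \<Rightarrow> real \<Rightarrow> real \<Rightarrow> 'a::euclidean_space \<Rightarrow> 'a \<times> (nat \<Rightarrow> 'a) \<Rightarrow> real" where
  "psaga_Psi n gamma mu xs s =
     (norm (fst s - xs))\<^sup>2 + gamma * mu * (\<Sum>i<n. (norm (snd s i - xs))\<^sup>2)"

text \<open>Expectation of Psi_k when i_0,...,i_{k-1} are i.i.d. uniform on {0..<n}:
  average over all n^k index sequences.\<close>
definition psaga_EPsi :: "nat \<Rightarrow> (nat \<Rightarrow> 'a::euclidean_space \<Rightarrow> real) \<Rightarrow> real \<Rightarrow> real
    \<Rightarrow> 'a \<Rightarrow> 'a \<times> (nat \<Rightarrow> 'a) \<Rightarrow> nat \<Rightarrow> real" where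
  "psaga_EPsi n f gamma mu xs s0 k =
     (\<Sum>is \<in> {is. length is = k \<and> set is \<subseteq> {..<n}}.
        psaga_Psi n gamma mu xs (psaga_run n f gamma s0 is)) / (real n ^ k)"

end

theory Submission imports Defs begin


lemma grad_has:
  fixes f :: "'a::euclidean_space \<Rightarrow> real"
  assumes "f differentiable (at x)"
  shows "(f has_derivative (\<lambda>h. grad f x \<bullet> h)) (at x)"
proof -
  obtain f' where D: "(f has_derivative f') (at x)" using assms differentiable_def by blast
  have L: "linear f'" using D has_derivative_linear by blast
  define g where "g = (\<Sum>b\<in>Basis. f' b *\<^sub>R b)"
  have "f' = (\<lambda>h. g \<bullet> h)"
  proof
    fix h :: 'a
    have "f' h = f' (\<Sum>b\<in>Basis. (h \<bullet> b) *\<^sub>R b)" by (simp add: euclidean_representation)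
    also have "\<dots> = (\<Sum>b\<in>Basis. (h \<bullet> b) * f' b)"
      using L by (simp add: linear_sum linear_scale)
    also have "\<dots> = g \<bullet> h" by (simp add: g_def inner_sum_right inner_commute mult.commute)
    finally show "f' h = g \<bullet> h" .
  qed
  with D have "\<exists>g. (f has_derivative (\<lambda>h. g \<bullet> h)) (at x)" by blast
  then show ?thesis unfolding grad_def by (rule someI_ex)
qed

lemma sc_tangent:
  fixes f :: "'a::euclidean_space \<Rightarrow> real"
  assumes sc: "strongly_convex mu f" and d: "\<And>y. f differentiable (at y)"
  shows "f z \<ge> f x + grad f x \<bullet> (z - x) + mu / 2 * (norm (z - x))\<^sup>2"
proof -
  define \<phi> where "\<phi> = (\<lambda>y. f y - mu / 2 * (norm y)\<^sup>2)"
  have cv: "convex_on UNIV \<phi>" using sc unfolding strongly_convex_def \<phi>_def .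
  define v where "v = z - x"
  define g where "g = (\<lambda>t::real. \<phi> (x + t *\<^sub>R v))"
  have cg: "convex_on UNIV g"
  proof (rule convex_onI)
    fix t a b :: real assume t: "t > 0" "t < 1"
    have "x + ((1 - t) *\<^sub>R a + t *\<^sub>R b) *\<^sub>R v = (1 - t) *\<^sub>R (x + a *\<^sub>R v) + t *\<^sub>R (x + b *\<^sub>R v)"
      by (simp add: algebra_simps)
    then show "g ((1 - t) *\<^sub>R a + t *\<^sub>R b) \<le> (1 - t) * g a + t * g b"
      unfolding g_def using convex_onD[OF cv, of t] t by simp
  qed simp
  have dphi: "(\<phi> has_derivative (\<lambda>h. (grad f x - mu *\<^sub>R x) \<bullet> h)) (at x)"
  proof -
    have "((\<lambda>y. f y - mu / 2 * (y \<bullet> y)) has_derivative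
       (\<lambda>h. grad f x \<bullet> h - mu / 2 * (h \<bullet> x + x \<bullet> h))) (at x)"
      using grad_has[OF d[of x]] by (intro derivative_eq_intros) auto
    then show ?thesis unfolding \<phi>_def
      by (simp add: power2_norm_eq_inner inner_diff_left inner_commute algebra_simps)
  qed
  have "(g has_derivative (\<lambda>t. ((grad f x - mu *\<^sub>R x) \<bullet> v) * t)) (at 0)"
  proof -
    have "((\<lambda>t::real. x + t *\<^sub>R v) has_derivative (\<lambda>t. t *\<^sub>R v)) (at 0)"
      by (intro derivative_eq_intros) auto
    from has_derivative_compose[OF this, of \<phi> "\<lambda>h. (grad f x - mu *\<^sub>R x) \<bullet> h"] dphi
    have "((\<lambda>t. \<phi> (x + t *\<^sub>R v)) has_derivative (\<lambda>t. (grad f x - mu *\<^sub>R x) \<bullet> (t *\<^sub>R v))) (at 0)"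
      by simp
    then show ?thesis unfolding g_def by (simp add: inner_scaleR_right mult.commute)
  qed
  then have "(g has_field_derivative ((grad f x - mu *\<^sub>R x) \<bullet> v)) (at 0 within UNIV)"
    by (simp add: has_field_derivative_def)
  from convex_on_imp_above_tangent[OF cg _ _ _ this, of 1]
  have "g 1 - g 0 \<ge> (grad f x - mu *\<^sub>R x) \<bullet> v" by simp
  then have "f z - mu / 2 * (z \<bullet> z) - f x + mu / 2 * (x \<bullet> x) \<ge> grad f x \<bullet> v - mu * (x \<bullet> v)"
    by (simp add: g_def \<phi>_def v_def power2_norm_eq_inner inner_diff_left)
  moreover have "(norm (z - x))\<^sup>2 = z \<bullet> z - 2 * (x \<bullet> z) + x \<bullet> x"
    by (simp add: power2_norm_eq_inner inner_diff_left inner_diff_right inner_commute)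
  then have "mu * (norm (z - x))\<^sup>2 = mu * (z \<bullet> z) - 2 * mu * (x \<bullet> z) + mu * (x \<bullet> x)"
    by (simp add: right_diff_distrib distrib_left)
  ultimately show ?thesis unfolding v_def
    by (simp add: inner_diff_right algebra_simps)
qed

lemma sc_mono:
  fixes f :: "'a::euclidean_space \<Rightarrow> real"
  assumes sc: "strongly_convex mu f" and d: "\<And>y. f differentiable (at y)"
  shows "(grad f z - grad f x) \<bullet> (z - x) \<ge> mu * (norm (z - x))\<^sup>2"
proof -
  have 1: "f z \<ge> f x + grad f x \<bullet> (z - x) + mu / 2 * (norm (z - x))\<^sup>2" by (rule sc_tangent[OF sc d])
  have 2: "f x \<ge> f z + grad f z \<bullet> (x - z) + mu / 2 * (norm (x - z))\<^sup>2" by (rule sc_tangent[OF sc d])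
  have "norm (x - z) = norm (z - x)" by (rule norm_minus_commute)
  moreover have "grad f z \<bullet> (x - z) = - (grad f z \<bullet> (z - x))"
    by (simp add: inner_diff_right)
  ultimately show ?thesis using 1 2 by (simp add: inner_diff_left)
qed

lemma prox_char:
  fixes f :: "'a::euclidean_space \<Rightarrow> real"
  assumes sc: "strongly_convex mu f" and mu: "mu > 0" and d: "\<And>y. f differentiable (at y)"
    and ga: "gamma > 0"
  shows "prox gamma f y + gamma *\<^sub>R grad f (prox gamma f y) = y"
proof -
  define \<psi> where "\<psi> = (\<lambda>z. f z + (norm (z - y))\<^sup>2 / (2 * gamma))"
  define G where "G = norm (grad f 0)"
  define Y where "Y = (norm y)\<^sup>2 / (2 * gamma)"
  define R where "R = 1 + 2 * G / mu + 2 * Y / mu"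
  have G0: "G \<ge> 0" and Y0: "Y \<ge> 0" using ga by (auto simp: G_def Y_def)
  have R1: "R \<ge> 1" using G0 Y0 mu by (simp add: R_def)
  have cont: "continuous_on (cball 0 R) \<psi>"
  proof -
    have "continuous_on (cball 0 R) f"
      by (intro continuous_at_imp_continuous_on ballI differentiable_imp_continuous_within d)
    then show ?thesis unfolding \<psi>_def using ga by (intro continuous_intros) auto
  qed
  obtain m where m: "m \<in> cball 0 R" "\<And>z. z \<in> cball 0 R \<Longrightarrow> \<psi> m \<le> \<psi> z"
    using continuous_attains_inf[OF compact_cball _ cont] R1 by fastforce
  have mall: "\<psi> m \<le> \<psi> z" for z
  proof (cases "z \<in> cball 0 R")
    case True then show ?thesis using m by blast
  next
    case False
    define t where "t = norm z"
    have tR: "t > R" using False by (simp add: t_def)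
    have tan: "f z \<ge> f 0 + grad f 0 \<bullet> (z - 0) + mu / 2 * (norm (z - 0))\<^sup>2"
      by (rule sc_tangent[OF sc d])
    have "grad f 0 \<bullet> z \<ge> - (G * t)"
      using norm_cauchy_schwarz[of "grad f 0" z] by (simp add: G_def t_def abs_le_iff)
      (smt (verit) Cauchy_Schwarz_ineq2 abs_le_iff)
    hence fz: "f z \<ge> f 0 - G * t + mu / 2 * t\<^sup>2" using tan by (simp add: t_def)
    have c: "mu / 2 * t - G > Y"
    proof -
      have "mu / 2 * t > mu / 2 * R" using tR mu by simp
      moreover have "mu / 2 * R = mu / 2 + G + Y" using mu by (simp add: R_def field_simps)
      ultimately show ?thesis using mu by linarith
    qed
    have "t * (mu / 2 * t - G) \<ge> 1 * (mu / 2 * t - G)"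
      using tR R1 c Y0 by (intro mult_right_mono) auto
    hence "- G * t + mu / 2 * t\<^sup>2 > Y" using c by (simp add: power2_eq_square algebra_simps)
    moreover have "(norm (z - y))\<^sup>2 / (2 * gamma) \<ge> 0" using ga by simp
    ultimately have "\<psi> z > \<psi> 0" using fz unfolding \<psi>_def Y_def by simp
    moreover have "\<psi> m \<le> \<psi> 0" using m(2)[of 0] R1 by simp
    ultimately show ?thesis by simp
  qed
  hence "\<exists>x. \<forall>z. f x + (norm (x - y))\<^sup>2 / (2 * gamma) \<le> f z + (norm (z - y))\<^sup>2 / (2 * gamma)"
    unfolding \<psi>_def by blast
  hence pmin: "\<forall>z. \<psi> (prox gamma f y) \<le> \<psi> z" unfolding prox_def \<psi>_def by (rule someI_ex)
  define p where "p = prox gamma f y"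
  have "((\<lambda>z. f z + ((z - y) \<bullet> (z - y)) / (2 * gamma)) has_derivative
      (\<lambda>h. grad f p \<bullet> h + (h \<bullet> (p - y) + (p - y) \<bullet> h) / (2 * gamma))) (at p)"
    using grad_has[OF d[of p]] ga by (intro derivative_eq_intros) auto
  hence D: "(\<psi> has_derivative (\<lambda>h. (grad f p + (1 / gamma) *\<^sub>R (p - y)) \<bullet> h)) (at p)"
  proof -
    have "(\<lambda>h. grad f p \<bullet> h + (h \<bullet> (p - y) + (p - y) \<bullet> h) / (2 * gamma))
        = (\<lambda>h. (grad f p + (1 / gamma) *\<^sub>R (p - y)) \<bullet> h)"
    proof
      fix h
      have "(h \<bullet> (p - y) + (p - y) \<bullet> h) / (2 * gamma) = (1 / gamma) * ((p - y) \<bullet> h)"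
        using ga by (simp add: inner_commute[of h])
      then show "grad f p \<bullet> h + (h \<bullet> (p - y) + (p - y) \<bullet> h) / (2 * gamma)
          = (grad f p + (1 / gamma) *\<^sub>R (p - y)) \<bullet> h"
        by (simp only: inner_add_left inner_scaleR_left)
    qed
    with \<open>(_ has_derivative _) (at p)\<close> show ?thesis
      unfolding \<psi>_def power2_norm_eq_inner by simp
  qed
  have "(\<lambda>h. (grad f p + (1 / gamma) *\<^sub>R (p - y)) \<bullet> h) = (\<lambda>v. 0)"
    by (rule differential_zero_maxmin[OF _ open_UNIV D]) (use pmin p_def in auto)
  hence "(grad f p + (1 / gamma) *\<^sub>R (p - y)) \<bullet> (grad f p + (1 / gamma) *\<^sub>R (p - y)) = 0"
    by metis
  hence "grad f p + (1 / gamma) *\<^sub>R (p - y) = 0" by simp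
  hence "gamma *\<^sub>R (grad f p + (1 / gamma) *\<^sub>R (p - y)) = 0" by simp
  hence "gamma *\<^sub>R grad f p + (p - y) = 0" using ga by (simp add: scaleR_add_right)
  thus ?thesis unfolding p_def[symmetric] by (simp add: algebra_simps)
qed


lemma sum_upd_norm:
  fixes w :: "nat \<Rightarrow> 'a::real_normed_vector"
  assumes "i < n"
  shows "(\<Sum>j<n. (norm ((w(i := z)) j - xs))\<^sup>2)
        = (\<Sum>j<n. (norm (w j - xs))\<^sup>2) - (norm (w i - xs))\<^sup>2 + (norm (z - xs))\<^sup>2"
proof -
  have i: "i \<in> {..<n}" using assms by simp
  have "(\<Sum>j<n. (norm ((w(i := z)) j - xs))\<^sup>2)
      = (norm (z - xs))\<^sup>2 + (\<Sum>j\<in>{..<n}-{i}. (norm ((w(i := z)) j - xs))\<^sup>2)"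
    using sum.remove[OF _ i, of "\<lambda>j. (norm ((w(i := z)) j - xs))\<^sup>2"] by simp
  also have "(\<Sum>j\<in>{..<n}-{i}. (norm ((w(i := z)) j - xs))\<^sup>2) = (\<Sum>j\<in>{..<n}-{i}. (norm (w j - xs))\<^sup>2)"
    by (rule sum.cong) auto
  also have "\<dots> = (\<Sum>j<n. (norm (w j - xs))\<^sup>2) - (norm (w i - xs))\<^sup>2"
    using sum.remove[OF _ i, of "\<lambda>j. (norm (w j - xs))\<^sup>2"] by simp
  finally show ?thesis by simp
qed

lemma norm_add_sq:
  fixes u d :: "'a::real_inner"
  shows "(norm (u + g *\<^sub>R d))\<^sup>2 = (norm u)\<^sup>2 + 2 * g * (u \<bullet> d) + g\<^sup>2 * (norm d)\<^sup>2"
  unfolding power2_norm_eq_inner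
  by (simp add: inner_add_left inner_add_right inner_commute power2_eq_square algebra_simps del: inner_real_def)

lemma contract_one:
  fixes a v b :: "'a::real_inner"
  assumes "a + g *\<^sub>R b = v" "b \<bullet> a \<ge> mu * (norm a)\<^sup>2" "g > 0" "mu > 0"
  shows "(1 + g * mu)\<^sup>2 * (norm a)\<^sup>2 \<le> (norm v)\<^sup>2"
proof -
  have "a \<bullet> v = (norm a)\<^sup>2 + g * (b \<bullet> a)"
    using assms(1)[symmetric] by (simp add: inner_add_right power2_norm_eq_inner inner_commute)
  also have "\<dots> \<ge> (norm a)\<^sup>2 + g * (mu * (norm a)\<^sup>2)"
    using assms by (simp add: mult_left_mono)
  finally have 1: "(1 + g * mu) * (norm a)\<^sup>2 \<le> a \<bullet> v" by (simp add: algebra_simps)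
  have 2: "a \<bullet> v \<le> norm a * norm v" by (rule norm_cauchy_schwarz)
  have "(1 + g * mu) * norm a \<le> norm v"
  proof (cases "norm a = 0")
    case True then show ?thesis by simp
  next
    case False
    then have "norm a > 0" by simp
    from 1 2 have "((1 + g * mu) * norm a) * norm a \<le> norm v * norm a"
      by (simp add: power2_eq_square algebra_simps)
    then show ?thesis using \<open>norm a > 0\<close> by simp
  qed
  moreover have "0 \<le> (1 + g * mu) * norm a" using assms by simp
  ultimately have "((1 + g * mu) * norm a)\<^sup>2 \<le> (norm v)\<^sup>2" by (rule power_mono)
  then show ?thesis by (simp add: power_mult_distrib)
qed


lemma grad_sum_zero:
  fixes f :: "nat \<Rightarrow> 'a::euclidean_space \<Rightarrow> real"
  assumes n: "n \<ge> 1" and diff: "\<And>i x. i < n \<Longrightarrow> f i differentiable (at x)"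
    and xmin: "\<And>y. (1 / real n) * (\<Sum>i<n. f i xstar) \<le> (1 / real n) * (\<Sum>i<n. f i y)"
  shows "(\<Sum>i<n. grad (f i) xstar) = 0"
proof -
  have D: "((\<lambda>y. (1 / real n) * (\<Sum>i<n. f i y)) has_derivative
      (\<lambda>h. (1 / real n) * (\<Sum>i<n. grad (f i) xstar \<bullet> h))) (at xstar)"
    by (intro derivative_eq_intros) (auto intro: grad_has diff)
  have "(\<lambda>h. (1 / real n) * (\<Sum>i<n. grad (f i) xstar \<bullet> h)) = (\<lambda>v. 0)"
    by (rule differential_zero_maxmin[OF _ open_UNIV D]) (use xmin in auto)
  hence "(1 / real n) * (\<Sum>i<n. grad (f i) xstar \<bullet> (\<Sum>i<n. grad (f i) xstar)) = 0"
    by metis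
  hence "(\<Sum>i<n. grad (f i) xstar \<bullet> (\<Sum>i<n. grad (f i) xstar)) = 0" using n by simp
  hence "(\<Sum>i<n. grad (f i) xstar) \<bullet> (\<Sum>i<n. grad (f i) xstar) = 0"
    by (simp add: inner_sum_left)
  thus ?thesis by simp
qed


lemma one_step:
  fixes n :: nat and f :: "nat \<Rightarrow> 'a::euclidean_space \<Rightarrow> real"
    and mu nu gamma :: real and xstar :: 'a and s :: "'a \<times> (nat \<Rightarrow> 'a)"
  assumes n_pos: "n \<ge> 1"
    and diff: "\<And>i x. i < n \<Longrightarrow> f i differentiable (at x)"
    and sconv: "\<And>i. i < n \<Longrightarrow> strongly_convex mu (f i)"
    and mu_pos: "mu > 0"
    and nu_pos: "nu > 0"
    and gsum: "(\<Sum>i<n. grad (f i) xstar) = 0"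
    and similarity: "\<And>xs :: nat \<Rightarrow> 'a.
        (1 / real n) * (\<Sum>j<n. (norm (grad (f j) (xs j)
            - (1 / real n) *\<^sub>R (\<Sum>i<n. grad (f i) (xs i)) - grad (f j) xstar))\<^sup>2)
        \<le> nu\<^sup>2 * ((1 / real n) * (\<Sum>j<n. (norm (xs j - xstar))\<^sup>2))"
    and gamma_def: "gamma = 1 / (nu\<^sup>2 / mu + (real n - 1) * mu)"
  shows "(\<Sum>i<n. psaga_Psi n gamma mu xstar (psaga_step n f gamma s i))
      \<le> real n / (1 + gamma * mu) * psaga_Psi n gamma mu xstar s"
proof -
  obtain x w where s: "s = (x, w)" by fastforce
  define gb where "gb = (1 / real n) *\<^sub>R (\<Sum>j<n. grad (f j) (w j))"
  define d where "d i = grad (f i) (w i) - gb - grad (f i) xstar" for i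
  define z where "z i = prox gamma (f i) (x + gamma *\<^sub>R (grad (f i) (w i) - gb))" for i
  define X where "X = (norm (x - xstar))\<^sup>2"
  define S where "S = (\<Sum>j<n. (norm (w j - xstar))\<^sup>2)"
  define \<kappa> where "\<kappa> = 1 + gamma * mu"
  have nr: "real n \<ge> 1" using n_pos by simp
  have den: "nu\<^sup>2 / mu + (real n - 1) * mu > 0"
    using mu_pos nu_pos nr by (intro add_pos_nonneg) auto
  have ga: "gamma > 0" using den gamma_def by simp
  have key: "gamma * (nu\<^sup>2 + (real n - 1) * mu\<^sup>2) = mu"
  proof -
    have "nu\<^sup>2 + (real n - 1) * mu\<^sup>2 = mu * (nu\<^sup>2 / mu + (real n - 1) * mu)"
      using mu_pos by (simp add: field_simps power2_eq_square)
    then show ?thesis using gamma_def den by simp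
  qed
  have kp: "\<kappa> > 0" using mult_pos_pos[OF ga mu_pos] by (simp add: \<kappa>_def)
  have S0: "S \<ge> 0" by (simp add: S_def sum_nonneg)
  have step: "psaga_step n f gamma s i = (z i, w(i := z i))" for i
    by (simp add: psaga_step_def s z_def gb_def Let_def)
  have Psi_i: "psaga_Psi n gamma mu xstar (psaga_step n f gamma s i)
     = \<kappa> * (norm (z i - xstar))\<^sup>2 + gamma * mu * S - gamma * mu * (norm (w i - xstar))\<^sup>2"
    if "i < n" for i
  proof -
    have U: "(\<Sum>j<n. (norm ((w(i := z i)) j - xstar))\<^sup>2) = S - (norm (w i - xstar))\<^sup>2 + (norm (z i - xstar))\<^sup>2"
      unfolding S_def by (rule sum_upd_norm[OF that])
    have "psaga_Psi n gamma mu xstar (psaga_step n f gamma s i)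
      = (norm (z i - xstar))\<^sup>2 + gamma * mu * (S - (norm (w i - xstar))\<^sup>2 + (norm (z i - xstar))\<^sup>2)"
      by (simp only: psaga_Psi_def step fst_conv snd_conv U)
    then show ?thesis by (simp add: \<kappa>_def algebra_simps)
  qed
  have contr: "\<kappa>\<^sup>2 * (norm (z i - xstar))\<^sup>2 \<le> (norm ((x - xstar) + gamma *\<^sub>R d i))\<^sup>2"
    if "i < n" for i
  proof -
    have pc: "z i + gamma *\<^sub>R grad (f i) (z i) = x + gamma *\<^sub>R (grad (f i) (w i) - gb)"
      unfolding z_def by (rule prox_char[OF sconv[OF that] mu_pos diff[OF that] ga])
    have "(z i - xstar) + gamma *\<^sub>R (grad (f i) (z i) - grad (f i) xstar) = (x - xstar) + gamma *\<^sub>R d i"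
      using pc by (simp add: d_def algebra_simps)
    moreover have "(grad (f i) (z i) - grad (f i) xstar) \<bullet> (z i - xstar) \<ge> mu * (norm (z i - xstar))\<^sup>2"
      by (rule sc_mono[OF sconv[OF that] diff[OF that]])
    ultimately show ?thesis unfolding \<kappa>_def using contract_one ga mu_pos by blast
  qed
  have sumd: "(\<Sum>i<n. d i) = 0"
  proof -
    have "(\<Sum>i<n. d i) = (\<Sum>i<n. grad (f i) (w i)) - real n *\<^sub>R gb - (\<Sum>i<n. grad (f i) xstar)"
      by (simp add: d_def sum_subtractf sum_constant_scaleR)
    also have "real n *\<^sub>R gb = (\<Sum>i<n. grad (f i) (w i))" using nr by (simp add: gb_def)
    finally show ?thesis using gsum by simp
  qed
  have sumv: "(\<Sum>i<n. (norm ((x - xstar) + gamma *\<^sub>R d i))\<^sup>2) = real n * X + gamma\<^sup>2 * (\<Sum>i<n. (norm (d i))\<^sup>2)"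
  proof -
    have "(\<Sum>i<n. (norm ((x - xstar) + gamma *\<^sub>R d i))\<^sup>2)
      = (\<Sum>i<n. X + 2 * gamma * ((x - xstar) \<bullet> d i) + gamma\<^sup>2 * (norm (d i))\<^sup>2)"
      by (simp add: norm_add_sq X_def)
    also have "\<dots> = real n * X + 2 * gamma * ((x - xstar) \<bullet> (\<Sum>i<n. d i)) + gamma\<^sup>2 * (\<Sum>i<n. (norm (d i))\<^sup>2)"
      by (simp add: sum.distrib sum_distrib_left inner_sum_right)
    finally show ?thesis using sumd by simp
  qed
  have simn: "(\<Sum>i<n. (norm (d i))\<^sup>2) \<le> nu\<^sup>2 * S"
  proof -
    have "(1 / real n) * (\<Sum>i<n. (norm (d i))\<^sup>2) \<le> nu\<^sup>2 * ((1 / real n) * S)"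
      using similarity[of w] by (simp add: d_def gb_def S_def)
    then show ?thesis using nr by (simp add: field_simps)
  qed
  define T where "T = (\<Sum>i<n. (norm (z i - xstar))\<^sup>2)"
  have T1: "\<kappa>\<^sup>2 * T \<le> real n * X + gamma\<^sup>2 * nu\<^sup>2 * S"
  proof -
    have "\<kappa>\<^sup>2 * T = (\<Sum>i<n. \<kappa>\<^sup>2 * (norm (z i - xstar))\<^sup>2)" by (simp add: T_def sum_distrib_left)
    also have "\<dots> \<le> (\<Sum>i<n. (norm ((x - xstar) + gamma *\<^sub>R d i))\<^sup>2)"
      by (rule sum_mono) (use contr in auto)
    also have "\<dots> \<le> real n * X + gamma\<^sup>2 * nu\<^sup>2 * S"
      using sumv simn mult_left_mono[OF simn, of "gamma\<^sup>2"] by simp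
    finally show ?thesis .
  qed
  have LHS: "(\<Sum>i<n. psaga_Psi n gamma mu xstar (psaga_step n f gamma s i))
      = \<kappa> * T + real n * (gamma * mu * S) - gamma * mu * S"
    by (simp add: Psi_i sum_subtractf sum.distrib sum_distrib_left T_def S_def)
  have RHS: "psaga_Psi n gamma mu xstar s = X + gamma * mu * S"
    by (simp add: psaga_Psi_def s X_def S_def)
  have e: "gamma\<^sup>2 * nu\<^sup>2 * S + (real n - 1) * gamma * mu * \<kappa> * S = real n * gamma * mu * S"
  proof -
    have "gamma\<^sup>2 * nu\<^sup>2 * S + (real n - 1) * gamma * mu * \<kappa> * S
       = gamma * S * (gamma * (nu\<^sup>2 + (real n - 1) * mu\<^sup>2)) + (real n - 1) * gamma * mu * S"
      by (simp add: \<kappa>_def power2_eq_square algebra_simps)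
    also have "\<dots> = real n * gamma * mu * S" using key by (simp add: algebra_simps)
    finally show ?thesis .
  qed
  have "\<kappa> * (\<kappa> * T + real n * (gamma * mu * S) - gamma * mu * S) \<le> real n * (X + gamma * mu * S)"
  proof -
    have "\<kappa> * (\<kappa> * T + real n * (gamma * mu * S) - gamma * mu * S)
       = \<kappa>\<^sup>2 * T + (real n - 1) * gamma * mu * \<kappa> * S"
      by (simp add: power2_eq_square algebra_simps)
    also have "\<dots> \<le> real n * X + gamma\<^sup>2 * nu\<^sup>2 * S + (real n - 1) * gamma * mu * \<kappa> * S"
      using T1 by simp
    also have "\<dots> = real n * (X + gamma * mu * S)" using e by (simp add: algebra_simps)
    finally show ?thesis .
  qed
  then have "\<kappa> * T + real n * (gamma * mu * S) - gamma * mu * S \<le> real n / \<kappa> * (X + gamma * mu * S)"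
    using kp by (simp add: field_simps)
  then show ?thesis using LHS RHS by (simp add: \<kappa>_def)
qed


lemma lists_Suc:
  "{is. length is = Suc k \<and> set is \<subseteq> A} = (\<lambda>(i, is). i # is) ` (A \<times> {is. length is = k \<and> set is \<subseteq> A})"
  by (auto simp: length_Suc_conv image_iff)

lemma EPsi_0: "psaga_EPsi n f gamma mu xs s 0 = psaga_Psi n gamma mu xs s"
proof -
  have "{is. length is = 0 \<and> set is \<subseteq> {..<n}} = {[]}" by auto
  then show ?thesis by (simp add: psaga_EPsi_def psaga_run_def)
qed

lemma EPsi_Suc:
  assumes "n \<ge> 1"
  shows "psaga_EPsi n f gamma mu xs s (Suc k)
    = (\<Sum>i<n. psaga_EPsi n f gamma mu xs (psaga_step n f gamma s i) k) / real n"
proof -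
  let ?L = "{is. length is = k \<and> set is \<subseteq> {..<n}}"
  let ?F = "\<lambda>s is. psaga_Psi n gamma mu xs (psaga_run n f gamma s is)"
  have fin: "finite ?L" using finite_lists_length_eq[of "{..<n}" k] by (simp add: conj_commute)
  have inj: "inj_on (\<lambda>(i, is). i # is) ({..<n} \<times> ?L)" by (auto simp: inj_on_def)
  have "(\<Sum>is\<in>{is. length is = Suc k \<and> set is \<subseteq> {..<n}}. ?F s is)
      = (\<Sum>(i, is)\<in>{..<n} \<times> ?L. ?F s (i # is))"
    unfolding lists_Suc by (subst sum.reindex[OF inj]) (simp add: o_def case_prod_unfold)
  also have "\<dots> = (\<Sum>i<n. \<Sum>is\<in>?L. ?F s (i # is))"
    by (rule sum.cartesian_product[symmetric])
  also have "\<dots> = (\<Sum>i<n. \<Sum>is\<in>?L. ?F (psaga_step n f gamma s i) is)"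
    by (simp add: psaga_run_def)
  finally have eq: "(\<Sum>is\<in>{is. length is = Suc k \<and> set is \<subseteq> {..<n}}. ?F s is)
     = (\<Sum>i<n. \<Sum>is\<in>?L. ?F (psaga_step n f gamma s i) is)" .
  show ?thesis unfolding psaga_EPsi_def eq
    using assms by (simp add: sum_divide_distrib field_simps)
qed

lemma EPsi_bound:
  assumes n: "n \<ge> 1" and q: "q \<ge> 0"
    and st: "\<And>s. (\<Sum>i<n. psaga_Psi n gamma mu xs (psaga_step n f gamma s i)) \<le> real n * q * psaga_Psi n gamma mu xs s"
  shows "psaga_EPsi n f gamma mu xs s k \<le> q ^ k * psaga_Psi n gamma mu xs s"
proof (induction k arbitrary: s)
  case 0 then show ?case by (simp add: EPsi_0)
next
  case (Suc k)
  have "psaga_EPsi n f gamma mu xs s (Suc k)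
    = (\<Sum>i<n. psaga_EPsi n f gamma mu xs (psaga_step n f gamma s i) k) / real n"
    by (rule EPsi_Suc[OF n])
  also have "\<dots> \<le> (\<Sum>i<n. q ^ k * psaga_Psi n gamma mu xs (psaga_step n f gamma s i)) / real n"
    using n by (intro divide_right_mono sum_mono Suc.IH) auto
  also have "\<dots> = q ^ k * (\<Sum>i<n. psaga_Psi n gamma mu xs (psaga_step n f gamma s i)) / real n"
    by (simp add: sum_distrib_left)
  also have "\<dots> \<le> q ^ k * (real n * q * psaga_Psi n gamma mu xs s) / real n"
    using n q st by (intro divide_right_mono mult_left_mono) auto
  also have "\<dots> = q ^ Suc k * psaga_Psi n gamma mu xs s" using n by simp
  finally show ?case .
qed


theorem mainTheorem13:
  fixes n :: nat and f :: "nat \<Rightarrow> 'a::euclidean_space \<Rightarrow> real"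
    and mu nu gamma eps :: real and xstar x0 :: 'a and w0 :: "nat \<Rightarrow> 'a" and k :: nat
  assumes n_pos: "n \<ge> 1"
    and diff: "\<And>i x. i < n \<Longrightarrow> f i differentiable (at x)"
    and sconv: "\<And>i. i < n \<Longrightarrow> strongly_convex mu (f i)"
    and mu_pos: "mu > 0"
    and nu_pos: "nu > 0"
    and xstar_min: "\<And>y. (1 / real n) * (\<Sum>i<n. f i xstar) \<le> (1 / real n) * (\<Sum>i<n. f i y)"
    and similarity: "\<And>xs :: nat \<Rightarrow> 'a.
        (1 / real n) * (\<Sum>j<n. (norm (grad (f j) (xs j)
            - (1 / real n) *\<^sub>R (\<Sum>i<n. grad (f i) (xs i)) - grad (f j) xstar))\<^sup>2)
        \<le> nu\<^sup>2 * ((1 / real n) * (\<Sum>j<n. (norm (xs j - xstar))\<^sup>2))"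
    and gamma_def: "gamma = 1 / (nu\<^sup>2 / mu + (real n - 1) * mu)"
    and eps_pos: "eps > 0"
    and k_large: "real k \<ge> (real n + nu\<^sup>2 / mu\<^sup>2) * ln (psaga_Psi n gamma mu xstar (x0, w0) / eps)"
  shows "psaga_EPsi n f gamma mu xstar (x0, w0) k \<le> eps"
proof -
  have gsum: "(\<Sum>i<n. grad (f i) xstar) = 0"
    by (rule grad_sum_zero[OF n_pos diff xstar_min])
  have nr: "real n \<ge> 1" using n_pos by simp
  have den: "nu\<^sup>2 / mu + (real n - 1) * mu > 0"
    using mu_pos nu_pos nr by (intro add_pos_nonneg) auto
  have ga: "gamma > 0" using den gamma_def by simp
  define q where "q = 1 / (1 + gamma * mu)"
  define c where "c = real n + nu\<^sup>2 / mu\<^sup>2"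
  have gm: "gamma * mu > 0" using ga mu_pos by simp
  have q0: "q \<ge> 0" using gm by (simp add: q_def)
  have cpos: "c > 0" using nr by (simp add: c_def add_pos_nonneg)
  have gmu: "gamma * mu = 1 / (c - 1)"
  proof -
    have "gamma * mu = mu / (nu\<^sup>2 / mu + (real n - 1) * mu)" using gamma_def by simp
    also have "\<dots> = 1 / (nu\<^sup>2 / mu\<^sup>2 + (real n - 1))"
      using mu_pos by (simp add: field_simps power2_eq_square)
    finally show ?thesis by (simp add: c_def)
  qed
  have c1: "c - 1 > 0"
  proof -
    have "nu\<^sup>2 / mu\<^sup>2 > 0" using nu_pos mu_pos by simp
    then show ?thesis using nr by (simp add: c_def)
  qed
  have qe: "q = 1 + (- 1 / c)"
    unfolding q_def gmu using c1 cpos by (simp add: field_simps)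
  have qexp: "q \<le> exp (- 1 / c)" unfolding qe by (rule exp_ge_add_one_self[THEN order_trans[rotated]]) simp
  have st: "\<And>s. (\<Sum>i<n. psaga_Psi n gamma mu xstar (psaga_step n f gamma s i))
      \<le> real n * q * psaga_Psi n gamma mu xstar s"
    using one_step[OF n_pos diff sconv mu_pos nu_pos gsum similarity gamma_def] by (simp add: q_def)
  define P where "P = psaga_Psi n gamma mu xstar (x0, w0)"
  have P0: "P \<ge> 0" using gm by (simp add: P_def psaga_Psi_def sum_nonneg)
  have E: "psaga_EPsi n f gamma mu xstar (x0, w0) k \<le> q ^ k * P"
    unfolding P_def by (rule EPsi_bound[OF n_pos q0 st])
  have qk: "q ^ k \<le> exp (- real k / c)"
  proof -
    have "q ^ k \<le> exp (- 1 / c) ^ k" by (rule power_mono[OF qexp q0])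
    also have "\<dots> = exp (- real k / c)" by (simp add: exp_of_nat_mult[symmetric])
    finally show ?thesis .
  qed
  show ?thesis
  proof (cases "P \<le> eps")
    case True
    have "q \<le> 1" using gm by (simp add: q_def)
    hence "q ^ k \<le> 1" using q0 by (simp add: power_le_one)
    hence "q ^ k * P \<le> P" using P0 using mult_right_mono[of "q ^ k" 1 P] by simp
    then show ?thesis using E True by linarith
  next
    case False
    hence Pp: "P > 0" using eps_pos by simp
    have "ln (P / eps) \<le> real k / c" using k_large cpos unfolding P_def[symmetric] c_def[symmetric]
      by (simp add: field_simps mult.commute)
    hence "P / eps \<le> exp (real k / c)" using Pp eps_pos
      by (metis divide_pos_pos exp_le_cancel_iff exp_ln)
    hence "P \<le> eps * exp (real k / c)" using eps_pos by (simp add: field_simps)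
    hence "exp (- real k / c) * P \<le> eps"
      by (simp add: exp_minus field_simps)
    moreover have "q ^ k * P \<le> exp (- real k / c) * P" using qk P0 by (rule mult_right_mono)
    ultimately show ?thesis using E by linarith
  qed
qed

end
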